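(* Let $m\ge3$ be an integer and let $\mathbf{C}$ be a binary linear $[2^{2m-3}+2^{m-2}-1,\ 2m-2]$ code whose set of nonzero weights is $\{2^{2m-4},\,2^{2m-4}+2^{m-2}\}$. Then the code $\mathbf{C}'$ obtained from $\mathbf{C}$ by the extension construction is a minimal binary linear $[3\cdot2^{2m-4}-1,\ 2m-2,\ 2^{2m-4}]_2$ code with maximum weight $2^{2m-3}$ which violates the Ashikhmin–Barg condition. Moreover, when $m\ge4$, $\mathbf{C}'$ is self-orthogonal.
   Context: Extension construction for a binary $[N,K]$ code $\mathbf{D}$, $K\ge2$, with minimum nonzero weight $w_{min}$, maximum weight $w_{max}$ and $n'=2w_{min}-w_{max}\ge1$: choose a basis $\mathbf{r}_1,\dots,\mathbf{r}_K$ with $wt(\mathbf{r}_1)=w_{max}$, $wt(\mathbf{r}_2)=w_{min}$; the extended code is generated by $(\mathbf{1},\mathbf{r}_1),(\mathbf{0},\mathbf{r}_2),\dots,(\mathbf{0},\mathbf{r}_K)$ in $\mathbf{F}_2^{n'+N}$, with $\mathbf{1},\mathbf{0}\in\mathbf{F}_2^{n'}$. Self-orthogonal: $\mathbf{C}\subseteq\mathbf{C}^\perp$. Minimal code: nonzero codewords with nested supports are equal. Ashikhmin–Barg condition (binary): $w_{min}/w_{max}>1/2$. *)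

theory Defs
  imports Complex_Main "HOL-Library.Z2"
begin

text \<open>Vectors of F_2^N are represented as functions nat => bit vanishing outside {0..<N}.\<close>

type_synonym bvec = "nat \<Rightarrow> bit"

definition vecs :: "nat \<Rightarrow> bvec set" where
  "vecs N = {v. \<forall>i\<ge>N. v i = 0}"

definition vadd :: "bvec \<Rightarrow> bvec \<Rightarrow> bvec" where
  "vadd x y = (\<lambda>i. x i + y i)"

definition zvec :: bvec where
  "zvec = (\<lambda>i. 0)"

definition supp :: "bvec \<Rightarrow> nat set" where
  "supp v = {i. v i \<noteq> 0}"

definition wt :: "bvec \<Rightarrow> nat" where
  "wt v = card (supp v)"

definition hdist :: "bvec \<Rightarrow> bvec \<Rightarrow> nat" where
  "hdist x y = card {i. x i \<noteq> y i}"

definition inner :: "nat \<Rightarrow> bvec \<Rightarrow> bvec \<Rightarrow> bit" where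
  "inner N x y = (\<Sum>i<N. x i * y i)"

text \<open>Binary linear code of length N (over F_2 closure under addition suffices).\<close>
definition binary_linear_code :: "nat \<Rightarrow> bvec set \<Rightarrow> bool" where
  "binary_linear_code N C \<longleftrightarrow> C \<subseteq> vecs N \<and> zvec \<in> C \<and> (\<forall>x\<in>C. \<forall>y\<in>C. vadd x y \<in> C)"

definition span_of :: "nat \<Rightarrow> (nat \<Rightarrow> bvec) \<Rightarrow> bvec set" where
  "span_of K r = {(\<lambda>j. \<Sum>i\<in>S. r i j) | S. S \<subseteq> {1..K}}"

definition lin_indep :: "nat \<Rightarrow> (nat \<Rightarrow> bvec) \<Rightarrow> bool" where
  "lin_indep K r \<longleftrightarrow> (\<forall>S \<subseteq> {1..K}. (\<lambda>j. \<Sum>i\<in>S. r i j) = zvec \<longrightarrow> S = {})"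

definition is_basis :: "bvec set \<Rightarrow> nat \<Rightarrow> (nat \<Rightarrow> bvec) \<Rightarrow> bool" where
  "is_basis C K r \<longleftrightarrow> (\<forall>i\<in>{1..K}. r i \<in> C) \<and> lin_indep K r \<and> span_of K r = C"

definition code_dim :: "bvec set \<Rightarrow> nat \<Rightarrow> bool" where
  "code_dim C K \<longleftrightarrow> (\<exists>r. is_basis C K r)"

definition nonzero_weights :: "bvec set \<Rightarrow> nat set" where
  "nonzero_weights C = {wt c | c. c \<in> C \<and> c \<noteq> zvec}"

definition min_wt :: "bvec set \<Rightarrow> nat" where
  "min_wt C = Min (nonzero_weights C)"

definition max_wt :: "bvec set \<Rightarrow> nat" where
  "max_wt C = Max (nonzero_weights C)"

definition min_distance :: "bvec set \<Rightarrow> nat" where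
  "min_distance C = Min {hdist x y | x y. x \<in> C \<and> y \<in> C \<and> x \<noteq> y}"

definition minimal_code :: "bvec set \<Rightarrow> bool" where
  "minimal_code C \<longleftrightarrow> (\<forall>c1\<in>C. \<forall>c2\<in>C. c1 \<noteq> zvec \<longrightarrow> c2 \<noteq> zvec \<longrightarrow> supp c1 \<subseteq> supp c2 \<longrightarrow> c1 = c2)"

definition dual_code :: "nat \<Rightarrow> bvec set \<Rightarrow> bvec set" where
  "dual_code N C = {v \<in> vecs N. \<forall>c\<in>C. inner N v c = 0}"

definition self_orthogonal :: "nat \<Rightarrow> bvec set \<Rightarrow> bool" where
  "self_orthogonal N C \<longleftrightarrow> C \<subseteq> dual_code N C"

definition ashikhmin_barg :: "bvec set \<Rightarrow> bool" where
  "ashikhmin_barg C \<longleftrightarrow> real (min_wt C) / real (max_wt C) > 1/2"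

definition concat_vec :: "nat \<Rightarrow> bvec \<Rightarrow> bvec \<Rightarrow> bvec" where
  "concat_vec n' u v = (\<lambda>i. if i < n' then u i else v (i - n'))"

definition ones :: "nat \<Rightarrow> bvec" where
  "ones n' = (\<lambda>i. if i < n' then 1 else 0)"

definition ext_code :: "bvec set \<Rightarrow> nat \<Rightarrow> (nat \<Rightarrow> bvec) \<Rightarrow> bvec set" where
  "ext_code C K r =
     (let n' = 2 * min_wt C - max_wt C
      in span_of K (\<lambda>i. if i = 1 then concat_vec n' (ones n') (r 1) else concat_vec n' zvec (r i)))"

end

theory Submission
  imports Defs
begin

lemma bit_cases2: "(b::bit) = 0 \<or> b = 1" by (cases b) auto

lemma bit_of_nat_0: "(of_nat k :: bit) = 0 \<longleftrightarrow> even k"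
  using bit_2_eq_0 dvd_field_iff even_of_nat by blast

lemma supp_vadd: "supp (vadd x y) = (supp x - supp y) \<union> (supp y - supp x)"
  unfolding supp_def vadd_def
  apply (rule set_eqI) apply simp
  by (metis bit_cases2)

lemma card_symdiff: "finite A \<Longrightarrow> finite B \<Longrightarrow> card((A-B)\<union>(B-A)) + 2*card(A\<inter>B) = card A + card B"
  by (smt (verit, ccfv_SIG) Diff_cancel Int_Diff Int_commute Un_Diff_cancel
    ab_semigroup_add_class.add_ac(1) add.commute
    boolean_algebra.conj_zero_right card_Int_Diff card_Un_disjoint
    finite_Diff2 mult_2)

lemma wt_vadd: "finite (supp x) \<Longrightarrow> finite (supp y) \<Longrightarrow>
   wt (vadd x y) + 2 * card (supp x \<inter> supp y) = wt x + wt y"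
  unfolding wt_def supp_vadd by (rule card_symdiff)

lemma wt_vadd_sub: "supp x \<subseteq> supp y \<Longrightarrow> finite (supp y) \<Longrightarrow> wt (vadd x y) = wt y - wt x"
proof -
  assume a: "supp x \<subseteq> supp y" "finite (supp y)"
  have "supp (vadd x y) = supp y - supp x" using a(1) unfolding supp_vadd by blast
  thus ?thesis unfolding wt_def using a by (simp add: card_Diff_subset finite_subset)
qed

lemma supp_concat_ones: "supp (concat_vec n (ones n) u) = {..<n} \<union> (\<lambda>k. k+n) ` supp u"
  unfolding supp_def concat_vec_def ones_def
  by (rule set_eqI) (auto simp: image_iff)

lemma supp_concat_z: "supp (concat_vec n zvec u) = (\<lambda>k. k+n) ` supp u"
  unfolding supp_def concat_vec_def zvec_def
  by (rule set_eqI) (auto simp: image_iff)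

lemma wt_concat_ones: "finite (supp u) \<Longrightarrow> wt (concat_vec n (ones n) u) = n + wt u"
  unfolding wt_def supp_concat_ones
  by (subst card_Un_disjoint) (auto simp: card_image inj_on_def)

lemma wt_concat_z: "wt (concat_vec n zvec u) = wt u"
  unfolding wt_def supp_concat_z
  by (simp add: card_image inj_on_def)

lemma vecs_finite: "v \<in> vecs N \<Longrightarrow> finite (supp v)"
proof -
  assume v: "v \<in> vecs N"
  have "supp v \<subseteq> {..<N}"
  proof
    fix i assume "i \<in> supp v"
    hence vi: "v i \<noteq> 0" unfolding supp_def by blast
    show "i \<in> {..<N}"
    proof (rule ccontr)
      assume "i \<notin> {..<N}"
      hence "i \<ge> N" by simp
      hence "v i = 0" using v unfolding vecs_def by blast
      thus False using vi by contradiction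
    qed
  qed
  thus ?thesis using finite_subset by blast
qed

lemma sum_sym_diff:
  fixes g :: "nat \<Rightarrow> bvec"
  assumes "finite S" "finite T"
  shows "vadd (\<lambda>j. \<Sum>i\<in>S. g i j) (\<lambda>j. \<Sum>i\<in>T. g i j) = (\<lambda>j. \<Sum>i\<in>(S-T)\<union>(T-S). g i j)"
proof
  fix j
  have s: "(\<Sum>i\<in>S. g i j) = (\<Sum>i\<in>S\<inter>T. g i j) + (\<Sum>i\<in>S-T. g i j)"
    using assms sum.Int_Diff by blast
  have t: "(\<Sum>i\<in>T. g i j) = (\<Sum>i\<in>S\<inter>T. g i j) + (\<Sum>i\<in>T-S. g i j)"
    using assms sum.Int_Diff[of T "\<lambda>i. g i j" S] by (metis Int_commute)
  have u: "(\<Sum>i\<in>(S-T)\<union>(T-S). g i j) = (\<Sum>i\<in>S-T. g i j) + (\<Sum>i\<in>T-S. g i j)"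
    using assms by (intro sum.union_disjoint) auto
  have x: "\<And>a b c::bit. (c + a) + (c + b) = a + b"
    subgoal for a b c by (cases a; cases b; cases c) auto done
  show "vadd (\<lambda>j. \<Sum>i\<in>S. g i j) (\<lambda>j. \<Sum>i\<in>T. g i j) j = (\<Sum>i\<in>(S-T)\<union>(T-S). g i j)"
    unfolding vadd_def s t u by (rule x)
qed

lemma bit_neq_add: "(a::bit) \<noteq> b \<longleftrightarrow> a + b \<noteq> 0"
  by (cases a; cases b) auto

lemma hdist_wt: "hdist x y = wt (vadd x y)"
  unfolding hdist_def wt_def supp_def vadd_def
  by (rule arg_cong[where f=card], rule Collect_cong, rule bit_neq_add)

lemma vadd_zvec: "vadd x y = zvec \<Longrightarrow> x = y"
proof (rule ext)
  fix i assume h: "vadd x y = zvec"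
  have "x i + y i = 0" using fun_cong[OF h, of i] unfolding vadd_def zvec_def by (simp only:)
  thus "x i = y i" using bit_neq_add[of "x i" "y i"] by blast
qed

lemma mul_of_bool: "(a::bit) * b = of_bool (a \<noteq> 0 \<and> b \<noteq> 0)"
  by (cases a; cases b) simp_all
lemma inner_card: "supp x \<subseteq> {..<L} \<Longrightarrow> inner L x y = of_nat (card (supp x \<inter> supp y))"
proof -
  assume a: "supp x \<subseteq> {..<L}"
  have "inner L x y = (\<Sum>i<L. of_bool (x i \<noteq> 0 \<and> y i \<noteq> 0))"
    unfolding inner_def mul_of_bool ..
  also have "\<dots> = of_nat (card ({..<L} \<inter> {i. x i \<noteq> 0 \<and> y i \<noteq> 0}))"
    by (rule sum_of_bool_eq; simp)
  also have "{..<L} \<inter> {i. x i \<noteq> 0 \<and> y i \<noteq> 0} = supp x \<inter> supp y"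
    using a unfolding supp_def by blast
  finally show ?thesis .
qed

theorem proposition5p4:
  fixes m :: nat and C :: "bvec set" and r :: "nat \<Rightarrow> bvec"
  assumes "m \<ge> 3"
    and "binary_linear_code (2^(2*m-3) + 2^(m-2) - 1) C"
    and "code_dim C (2*m-2)"
    and "nonzero_weights C = {2^(2*m-4), 2^(2*m-4) + 2^(m-2)}"
    and "is_basis C (2*m-2) r"
    and "wt (r 1) = max_wt C"
    and "wt (r 2) = min_wt C"
  shows "binary_linear_code (3 * 2^(2*m-4) - 1) (ext_code C (2*m-2) r)
       \<and> code_dim (ext_code C (2*m-2) r) (2*m-2)
       \<and> min_distance (ext_code C (2*m-2) r) = 2^(2*m-4)
       \<and> minimal_code (ext_code C (2*m-2) r)
       \<and> max_wt (ext_code C (2*m-2) r) = 2^(2*m-3)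
       \<and> \<not> ashikhmin_barg (ext_code C (2*m-2) r)
       \<and> (m \<ge> 4 \<longrightarrow> self_orthogonal (3 * 2^(2*m-4) - 1) (ext_code C (2*m-2) r))"
proof -
  let ?K = "2*m-2"
  let ?E = "ext_code C (2*m-2) r"
  let ?L = "3 * 2^(2*m-4) - 1 :: nat"
  let ?N = "2^(2*m-3) + 2^(m-2) - 1 :: nat"
  define A :: nat where "A = 2^(2*m-4)"
  define d :: nat where "d = 2^(m-2)"
  have m3: "m \<ge> 3" by fact
  have dA: "d < A" unfolding A_def d_def by (rule power_strict_increasing) (use m3 in auto)
  have Apos: "A > 0" unfolding A_def by simp
  have e3: "2*m-3 = Suc (2*m-4)" using m3 by simp
  have A2: "(2::nat)^(2*m-3) = 2*A" unfolding A_def e3 by simp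
  have Nv: "?N = 2*A + d - 1" unfolding A2 d_def by simp
  have Lv: "?L = 3*A - 1" unfolding A_def by simp
  have K4: "?K \<ge> 4" using m3 by simp
  have Csub: "C \<subseteq> vecs ?N" using assms(2) unfolding binary_linear_code_def by blast
  have rC: "\<And>i. i \<in> {1..?K} \<Longrightarrow> r i \<in> C" using assms(5) unfolding is_basis_def by blast
  have li: "lin_indep ?K r" using assms(5) unfolding is_basis_def by blast
  have spC: "span_of ?K r = C" using assms(5) unfolding is_basis_def by blast
  have nwC: "nonzero_weights C = {A, A+d}" using assms(4) unfolding A_def d_def .
  have minC: "min_wt C = A" unfolding min_wt_def nwC using dA by simp
  have maxC: "max_wt C = A+d" unfolding max_wt_def nwC using dA by simp
  define n where "n = A - d"
  have nv: "2 * min_wt C - max_wt C = n" unfolding minC maxC n_def by simp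
  define g where "g = (\<lambda>i. if i = 1 then concat_vec n (ones n) (r 1) else concat_vec n zvec (r i))"
  have Edef: "?E = span_of ?K g" unfolding ext_code_def Let_def nv g_def ..
  define sr where "sr = (\<lambda>S. (\<lambda>j. \<Sum>i\<in>S. r i j))"
  define ge where "ge = (\<lambda>S. (\<lambda>j. \<Sum>i\<in>S. g i j))"
  have EmemI: "\<And>S. S \<subseteq> {1..?K} \<Longrightarrow> ge S \<in> ?E"
    unfolding Edef span_of_def ge_def by blast
  have EmemE: "\<And>x. x \<in> ?E \<Longrightarrow> \<exists>S. S \<subseteq> {1..?K} \<and> x = ge S"
    unfolding Edef span_of_def ge_def by blast
  have srC: "\<And>S. S \<subseteq> {1..?K} \<Longrightarrow> sr S \<in> C"
    unfolding spC[symmetric] span_of_def sr_def by blast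
  have srvec: "\<And>S. S \<subseteq> {1..?K} \<Longrightarrow> sr S \<in> vecs ?N" using srC Csub by blast
  have srnz: "\<And>S. S \<subseteq> {1..?K} \<Longrightarrow> S \<noteq> {} \<Longrightarrow> sr S \<noteq> zvec"
    using li unfolding lin_indep_def sr_def by blast
  have wtC: "\<And>c. c \<in> C \<Longrightarrow> c \<noteq> zvec \<Longrightarrow> wt c = A \<or> wt c = A+d"
  proof -
    fix c assume "c \<in> C" "c \<noteq> zvec"
    hence "wt c \<in> nonzero_weights C" unfolding nonzero_weights_def by blast
    thus "wt c = A \<or> wt c = A+d" unfolding nwC by simp
  qed
  have rep: "\<And>S. S \<subseteq> {1..?K} \<Longrightarrow> ge S = concat_vec n (if 1 \<in> S then ones n else zvec) (sr S)"
  proof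
    fix S j assume S: "S \<subseteq> {1..?K}"
    hence fS: "finite S" by (rule finite_subset) simp
    show "ge S j = concat_vec n (if 1 \<in> S then ones n else zvec) (sr S) j"
    proof (cases "j < n")
      case True
      have "ge S j = (\<Sum>i\<in>S. if i = 1 then 1 else 0)"
        unfolding ge_def g_def concat_vec_def ones_def zvec_def using True
        by (intro sum.cong) auto
      also have "\<dots> = (if 1 \<in> S then 1 else 0)" using fS by (simp add: sum.delta)
      finally show ?thesis using True unfolding concat_vec_def ones_def zvec_def by simp
    next
      case False
      have "ge S j = (\<Sum>i\<in>S. r i (j-n))" unfolding ge_def g_def concat_vec_def using False
        by (intro sum.cong) auto
      thus ?thesis using False unfolding concat_vec_def sr_def by simp
    qed
  qed
  have ge_empty: "ge {} = zvec" unfolding ge_def zvec_def by simp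
  have wt1: "\<And>S. S \<subseteq> {1..?K} \<Longrightarrow> 1 \<in> S \<Longrightarrow> wt (ge S) = n + wt (sr S)"
    using rep wt_concat_ones vecs_finite[OF srvec] by simp
  have wt0: "\<And>S. S \<subseteq> {1..?K} \<Longrightarrow> 1 \<notin> S \<Longrightarrow> wt (ge S) = wt (sr S)"
    using rep wt_concat_z by simp
  have W1: "\<And>S. S \<subseteq> {1..?K} \<Longrightarrow> 1 \<in> S \<Longrightarrow> wt (ge S) = 2*A-d \<or> wt (ge S) = 2*A"
  proof -
    fix S assume S: "S \<subseteq> {1..?K}" "1 \<in> S"
    have "wt (sr S) = A \<or> wt (sr S) = A+d" using wtC srC srnz S by blast
    thus "wt (ge S) = 2*A-d \<or> wt (ge S) = 2*A" using wt1[OF S] dA unfolding n_def by auto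
  qed
  have W0: "\<And>S. S \<subseteq> {1..?K} \<Longrightarrow> 1 \<notin> S \<Longrightarrow> S \<noteq> {} \<Longrightarrow> wt (ge S) = A \<or> wt (ge S) = A+d"
    using wt0 wtC srC srnz by metis
  have wtz: "wt zvec = 0" unfolding wt_def supp_def zvec_def by simp
  have genz: "\<And>S. S \<subseteq> {1..?K} \<Longrightarrow> S \<noteq> {} \<Longrightarrow> ge S \<noteq> zvec"
  proof -
    fix S assume S: "S \<subseteq> {1..?K}" "S \<noteq> {}"
    have "wt (ge S) > 0" using W0[OF S(1)] W1[OF S(1)] S(2) dA Apos by (cases "1 \<in> S") auto
    thus "ge S \<noteq> zvec" using wtz by auto
  qed
  have fin: "\<And>S. S \<subseteq> {1..?K} \<Longrightarrow> finite S" by (meson finite_atLeastAtMost finite_subset)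
  have add: "\<And>S T. S \<subseteq> {1..?K} \<Longrightarrow> T \<subseteq> {1..?K} \<Longrightarrow> vadd (ge S) (ge T) = ge ((S-T)\<union>(T-S))"
    unfolding ge_def by (rule sum_sym_diff[OF fin fin])
  have EvL: "?E \<subseteq> vecs ?L"
  proof
    fix x assume "x \<in> ?E"
    then obtain S where S: "S \<subseteq> {1..?K}" "x = ge S" using EmemE by blast
    show "x \<in> vecs ?L" unfolding vecs_def
    proof (intro CollectI allI impI)
      fix j assume j: "j \<ge> ?L"
      have jn: "\<not> j < n" "j - n \<ge> ?N" using j dA unfolding Lv Nv n_def by auto
      have "sr S (j - n) = 0" using srvec[OF S(1)] jn(2) unfolding vecs_def by blast
      thus "x j = 0" unfolding S(2) rep[OF S(1)] concat_vec_def using jn(1) by simp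
    qed
  qed
  have zE: "zvec \<in> ?E" using EmemI[of "{}"] ge_empty by simp
  have addE: "\<And>x y. x \<in> ?E \<Longrightarrow> y \<in> ?E \<Longrightarrow> vadd x y \<in> ?E"
  proof -
    fix x y assume "x \<in> ?E" "y \<in> ?E"
    then obtain S T where ST: "S \<subseteq> {1..?K}" "x = ge S" "T \<subseteq> {1..?K}" "y = ge T" using EmemE by metis
    have "(S-T)\<union>(T-S) \<subseteq> {1..?K}" using ST by blast
    thus "vadd x y \<in> ?E" using add[OF ST(1) ST(3)] EmemI ST by simp
  qed
  have P1: "binary_linear_code ?L ?E" unfolding binary_linear_code_def by (intro conjI EvL zE ballI addE)
  have gE: "\<And>i. i \<in> {1..?K} \<Longrightarrow> g i = ge {i}" unfolding ge_def
    by (simp only: sum.insert[OF finite.emptyI] empty_iff if_False sum.empty add_0_right not_False_eq_True)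
  have P2: "code_dim ?E ?K"
    unfolding code_dim_def is_basis_def
  proof (intro exI[of _ g] conjI ballI)
    fix i assume i: "i \<in> {1..?K}"
    have "{i} \<subseteq> {1..?K}" using i by blast
    thus "g i \<in> ?E" unfolding gE[OF i] by (rule EmemI)
  next
    show "lin_indep ?K g" unfolding lin_indep_def
    proof (intro allI impI)
      fix S assume "S \<subseteq> {1..?K}" "(\<lambda>j. \<Sum>i\<in>S. g i j) = zvec"
      thus "S = {}" using genz[of S] unfolding ge_def by blast
    qed
  next
    show "span_of ?K g = ?E" using Edef by (rule sym)
  qed
  have WE: "\<And>x. x \<in> ?E \<Longrightarrow> x \<noteq> zvec \<Longrightarrow> wt x \<in> {A, A+d, 2*A-d, 2*A}"
  proof -
    fix x assume "x \<in> ?E" "x \<noteq> zvec"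
    then obtain S where S: "S \<subseteq> {1..?K}" "x = ge S" using EmemE by blast
    have "S \<noteq> {}" using S ge_empty \<open>x \<noteq> zvec\<close> by auto
    thus "wt x \<in> {A, A+d, 2*A-d, 2*A}" using W0[OF S(1)] W1[OF S(1)] S(2) by (cases "1 \<in> S") auto
  qed
  have NWs: "nonzero_weights ?E \<subseteq> {A, A+d, 2*A-d, 2*A}"
    unfolding nonzero_weights_def using WE by blast
  have NWf: "finite (nonzero_weights ?E)" using NWs finite_subset by blast
  have sK: "{1} \<subseteq> {1..?K}" "{2} \<subseteq> {1..?K}" using K4 by auto
  have srs: "\<And>i. sr {i} = r i" unfolding sr_def
    by (simp only: sum.insert[OF finite.emptyI] empty_iff if_False sum.empty add_0_right not_False_eq_True)
  have ge1: "wt (ge {1}) = 2*A"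
  proof -
    have "wt (ge {1}) = n + wt (r 1)" using wt1[OF sK(1)] unfolding srs by simp
    thus ?thesis using assms(6) maxC dA unfolding n_def by simp
  qed
  have ge2: "wt (ge {2}) = A"
  proof -
    have "wt (ge {2}) = wt (r 2)" using wt0[OF sK(2)] unfolding srs by simp
    thus ?thesis using assms(7) minC by simp
  qed
  have g1E: "ge {1} \<in> ?E" "ge {1} \<noteq> zvec" using EmemI sK genz by auto
  have g2E: "ge {2} \<in> ?E" "ge {2} \<noteq> zvec" using EmemI sK genz by auto
  have in1: "2*A \<in> nonzero_weights ?E" unfolding nonzero_weights_def using g1E ge1 by force
  have in2: "A \<in> nonzero_weights ?E" unfolding nonzero_weights_def using g2E ge2 by force
  have maxE: "max_wt ?E = 2*A" unfolding max_wt_def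
    using NWs dA in1 by (intro Max_eqI[OF NWf]) auto
  have minE: "min_wt ?E = A" unfolding min_wt_def
    using NWs dA in2 by (intro Min_eqI[OF NWf]) auto
  have P5: "max_wt ?E = 2^(2*m-3)" using maxE A2 by simp
  have P6: "\<not> ashikhmin_barg ?E" unfolding ashikhmin_barg_def maxE minE using Apos by simp
  have P3: "min_distance ?E = 2^(2*m-4)"
  proof -
    let ?D = "{hdist x y | x y. x \<in> ?E \<and> y \<in> ?E \<and> x \<noteq> y}"
    have Ds: "?D \<subseteq> nonzero_weights ?E"
    proof
      fix k assume "k \<in> ?D"
      then obtain x y where xy: "x \<in> ?E" "y \<in> ?E" "x \<noteq> y" "k = hdist x y" by blast
      have "vadd x y \<in> ?E" "vadd x y \<noteq> zvec" using addE xy vadd_zvec by auto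
      thus "k \<in> nonzero_weights ?E" unfolding nonzero_weights_def xy(4) hdist_wt by blast
    qed
    have "vadd (ge {2}) zvec = ge {2}" unfolding vadd_def zvec_def by (rule ext) (simp only: add_0_right)
    hence "hdist (ge {2}) zvec = A" unfolding hdist_wt using ge2 by simp
    hence AD: "A \<in> ?D" using g2E zE by force
    have Df: "finite ?D" using Ds NWf finite_subset by blast
    have "Min ?D = A"
    proof (rule Min_eqI[OF Df])
      fix k assume "k \<in> ?D"
      hence "k \<in> {A, A+d, 2*A-d, 2*A}" using Ds NWs by blast
      thus "A \<le> k" using dA by auto
    qed (rule AD)
    thus ?thesis unfolding min_distance_def A_def .
  qed
  have P4: "minimal_code ?E" unfolding minimal_code_def
  proof (intro ballI impI)
    fix x y assume xE: "x \<in> ?E" and yE: "y \<in> ?E" and xz: "x \<noteq> zvec" and yz: "y \<noteq> zvec"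
      and sub: "supp x \<subseteq> supp y"
    show "x = y"
    proof (rule ccontr)
      assume ne: "x \<noteq> y"
      obtain S where S: "S \<subseteq> {1..?K}" "x = ge S" using EmemE xE by blast
      obtain T where T: "T \<subseteq> {1..?K}" "y = ge T" using EmemE yE by blast
      let ?U = "(S-T)\<union>(T-S)"
      have U: "?U \<subseteq> {1..?K}" using S T by auto
      have vU: "vadd x y = ge ?U" using add S T by simp
      have Sne: "S \<noteq> {}" "T \<noteq> {}" using S T xz yz ge_empty by auto
      have Une: "?U \<noteq> {}" using ne S T by auto
      have "finite (supp y)" using yE EvL vecs_finite by blast
      hence weq: "wt (ge ?U) = wt (ge T) - wt (ge S)" using wt_vadd_sub[OF sub] vU S T by simp
      have "finite (supp (vadd x y))" using addE[OF xE yE] EvL vecs_finite by blast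
      have le: "wt (ge S) \<le> wt (ge T)" using sub \<open>finite (supp y)\<close> S T unfolding wt_def
        by (simp add: card_mono)
      have bS: "(1 \<in> S \<longrightarrow> wt (ge S) \<ge> 2*A-d) \<and> (1 \<notin> S \<longrightarrow> wt (ge S) \<ge> A \<and> wt (ge S) \<le> A+d)"
        using W0[OF S(1) _ Sne(1)] W1[OF S(1)] dA by auto
      have bT: "(1 \<in> T \<longrightarrow> wt (ge T) \<le> 2*A) \<and> (1 \<notin> T \<longrightarrow> wt (ge T) \<ge> A \<and> wt (ge T) \<le> A+d)"
        using W0[OF T(1) _ Sne(2)] W1[OF T(1)] dA by auto
      have bU: "(1 \<in> ?U \<longrightarrow> wt (ge ?U) \<ge> 2*A-d) \<and> (1 \<notin> ?U \<longrightarrow> wt (ge ?U) \<ge> A)"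
        using W0[OF U _ Une] W1[OF U] dA by auto
      show False using bS bT bU weq le dA by (cases "1 \<in> S"; cases "1 \<in> T") auto
    qed
  qed
  have P7: "m \<ge> 4 \<longrightarrow> self_orthogonal ?L ?E"
  proof
    assume m4: "m \<ge> 4"
    have dA4: "4 dvd A"
    proof -
      have "(2::nat)^2 dvd 2^(2*m-4)" by (rule le_imp_power_dvd) (use m3 in simp)
      thus ?thesis unfolding A_def by simp
    qed
    have dd4: "4 dvd d"
    proof -
      have "(2::nat)^2 dvd 2^(m-2)" by (rule le_imp_power_dvd) (use m4 in simp)
      thus ?thesis unfolding d_def by simp
    qed
    have w4: "\<And>x. x \<in> ?E \<Longrightarrow> 4 dvd wt x"
    proof -
      fix x assume xE: "x \<in> ?E"
      show "4 dvd wt x"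
      proof (cases "x = zvec")
        case True thus ?thesis using wtz by simp
      next
        case False
        hence "wt x \<in> {A, A+d, 2*A-d, 2*A}" using WE xE by blast
        thus ?thesis using dA4 dd4 dA by (auto intro: dvd_diff_nat)
      qed
    qed
    show "self_orthogonal ?L ?E" unfolding self_orthogonal_def dual_code_def
    proof (intro subsetI CollectI conjI ballI)
      fix x assume xE: "x \<in> ?E"
      thus "x \<in> vecs ?L" using EvL by blast
      fix c assume cE: "c \<in> ?E"
      have xv: "\<forall>i\<ge>?L. x i = 0" using EvL xE unfolding vecs_def by blast
      have xs: "supp x \<subseteq> {..<?L}"
      proof
        fix i assume "i \<in> supp x"
        hence "x i \<noteq> 0" unfolding supp_def by blast
        thus "i \<in> {..<?L}" using xv not_less by blast
      qed
      have fx: "finite (supp x)" "finite (supp c)" using EvL xE cE vecs_finite by blast+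
      have eq: "wt (vadd x c) + 2 * card (supp x \<inter> supp c) = wt x + wt c"
        by (rule wt_vadd[OF fx])
      have "4 dvd wt (vadd x c)" "4 dvd wt x" "4 dvd wt c" using w4 addE xE cE by blast+
      hence h0: "4 dvd wt (vadd x c)" "4 dvd wt x + wt c" by (auto intro: dvd_add)
      hence h1: "4 dvd wt (vadd x c) + 2 * card (supp x \<inter> supp c)" unfolding eq by blast
      have h2: "4 dvd 2 * card (supp x \<inter> supp c)" using h1 h0(1) by (simp add: dvd_add_right_iff)
      have ev: "\<And>k::nat. 4 dvd 2*k \<Longrightarrow> even k" by presburger
      have "even (card (supp x \<inter> supp c))" using ev[OF h2] .
      thus "inner ?L x c = 0" using inner_card[OF xs] bit_of_nat_0 by simp
    qed
  qed
  show ?thesis by (intro conjI P1 P2 P3 P4 P5 P6 P7)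
qed

end
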